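(* Let $0<a_0<1\le C_0<\infty$, $\lambda_{univ}=\sqrt{(2/n)\log p}$ and $s=a_0n/\log p$. Suppose that $$\inf_{\delta}\sup_{\beta}\Big\{\|\delta(X,y)-\beta\|_2^2:\ y=X\beta,\ \textstyle\sum_{j=1}^p\min(|\beta_j|/\lambda_{univ},1)\le s+1\Big\}\le 2C_0 s(\log p)/n,$$ where the infimum is over all maps $\delta:(X,y)\mapsto\delta(X,y)\in\mathbb{R}^p$. Then the values $\eta_j^*$ produced by Step 1 of the score-selection algorithm (with default input $\eta_j^*=\sqrt{2\log p}$ and $\kappa_1\in(0,1]$) satisfy $\max_{j\le p}\eta_j^*\le(1+\kappa_1)\sqrt{(4C_0/a_0)\log p}$.
   Context: $X=(x_1,\dots,x_p)\in\mathbb{R}^{n\times p}$ is a deterministic matrix with columns normalized so that $\|x_j\|_2^2=n$ for all $j$; $X_{-j}$ denotes the $n\times(p-1)$ matrix with columns $x_k$, $k\neq j$. For $\lambda>0$ let $\hat\gamma_j(\lambda)\in\arg\min_{b\in\mathbb{R}^{p-1}}\{\|x_j-X_{-j}b\|_2^2/(2n)+\lambda\|b\|_1\}$, $z_j(\lambda)=x_j-X_{-j}\hat\gamma_j(\lambda)$, $\eta_j(\lambda)=\max_{k\neq j}|x_k^Tz_j(\lambda)|/\|z_j(\lambda)\|_2$, $\tau_j(\lambda)=\|z_j(\lambda)\|_2/|x_j^Tz_j(\lambda)|$. Score-selection algorithm (for fixed $j$): Input: an upper bound $\eta_j^*$ (default $\sqrt{2\log p}$), tuning parameters $\kappa_0\in[0,1]$,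 $\kappa_1\in(0,1]$. Step 1: if $\eta_j(\lambda)>\eta_j^*$ for all $\lambda>0$, reset $\eta_j^*\leftarrow(1+\kappa_1)\inf_{\lambda>0}\eta_j(\lambda)$; then set $\lambda\leftarrow\max\{\lambda:\eta_j(\lambda)\le\eta_j^*\}$, $\eta_j^*\leftarrow\eta_j(\lambda)$, $\tau_j^*\leftarrow\tau_j(\lambda)$. Step 2: $\lambda_j\leftarrow\min\{\lambda:\tau_j(\lambda)\le(1+\kappa_0)\tau_j^*\}$. Output: $\lambda_j$, $z_j=z_j(\lambda_j)$, $\tau_j=\tau_j(\lambda_j)$, $\eta_j=\eta_j(\lambda_j)$. *)

theory Defs
  imports "HOL-Analysis.Analysis"
begin

text \<open>Design matrix X is n x p: type real^'p^'n (rows indexed by 'n, columns by 'p).  A vector b in R^{p-1} indexed by k /= j is represented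
  as a vector b :: real^'p with b$j = 0, so that X_{-j} b = X *v b.\<close>

definition lasso_obj :: "real^'p^'n \<Rightarrow> 'p \<Rightarrow> real \<Rightarrow> real^'p \<Rightarrow> real" where
  "lasso_obj X j lam b =
     (norm (column j X - X *v b))\<^sup>2 / (2 * real CARD('n)) + lam * (\<Sum>k\<in>UNIV - {j}. \<bar>b $ k\<bar>)"

definition gamma_hat :: "real^'p^'n \<Rightarrow> 'p \<Rightarrow> real \<Rightarrow> real^'p" where
  "gamma_hat X j lam =
     (SOME b. b $ j = 0 \<and> (\<forall>b'. b' $ j = 0 \<longrightarrow> lasso_obj X j lam b \<le> lasso_obj X j lam b'))"

definition z_score :: "real^'p^'n \<Rightarrow> 'p \<Rightarrow> real \<Rightarrow> real^'n" where
  "z_score X j lam = column j X - X *v gamma_hat X j lam"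

definition eta :: "real^'p^'n \<Rightarrow> 'p \<Rightarrow> real \<Rightarrow> real" where
  "eta X j lam = Max ((\<lambda>k. \<bar>column k X \<bullet> z_score X j lam\<bar> / norm (z_score X j lam)) ` (UNIV - {j}))"

definition step1_threshold :: "real^'p^'n \<Rightarrow> 'p \<Rightarrow> real \<Rightarrow> real" where
  "step1_threshold X j kappa1 =
     (let e0 = sqrt (2 * ln (real CARD('p))) in
      if (\<forall>lam>0. eta X j lam > e0)
      then (1 + kappa1) * (INF lam\<in>{0<..}. eta X j lam)
      else e0)"

definition step1_eta_star :: "real^'p^'n \<Rightarrow> 'p \<Rightarrow> real \<Rightarrow> real \<Rightarrow> bool" where
  "step1_eta_star X j kappa1 e \<longleftrightarrow>
     (\<exists>lam. lam > 0 \<and> eta X j lam \<le> step1_threshold X j kappa1 \<and>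
        (\<forall>mu>0. eta X j mu \<le> step1_threshold X j kappa1 \<longrightarrow> mu \<le> lam) \<and>
        e = eta X j lam)"

end

theory Submission
  imports Defs
begin


lemma compact_l1:
  fixes j :: "'p::finite"
  shows "compact {b::real^'p. b$j = 0 \<and> (\<Sum>k\<in>UNIV-{j}. \<bar>b$k\<bar>) \<le> R}"
unfolding compact_eq_bounded_closed proof
  show "bounded {b::real^'p. b$j = 0 \<and> (\<Sum>k\<in>UNIV-{j}. \<bar>b$k\<bar>) \<le> R}"
  proof (rule boundedI)
    fix b :: "real^'p" assume "b \<in> {b::real^'p. b$j = 0 \<and> (\<Sum>k\<in>UNIV-{j}. \<bar>b$k\<bar>) \<le> R}"
    hence b: "b$j = 0" "(\<Sum>k\<in>UNIV-{j}. \<bar>b$k\<bar>) \<le> R" by auto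
    have "(\<Sum>k\<in>UNIV. \<bar>b$k\<bar>) = \<bar>b$j\<bar> + (\<Sum>k\<in>UNIV-{j}. \<bar>b$k\<bar>)"
      by (simp add: sum.remove[of UNIV j])
    thus "norm b \<le> R" using norm_le_l1_cart[of b] b by simp
  qed
  show "closed {b::real^'p. b$j = 0 \<and> (\<Sum>k\<in>UNIV-{j}. \<bar>b$k\<bar>) \<le> R}"
    by (intro closed_Collect_conj closed_Collect_eq closed_Collect_le continuous_intros)
qed


lemma lasso_exists:
  fixes X :: "real^'p^'n" and j :: 'p
  assumes lam: "lam > 0"
  shows "\<exists>b. b $ j = 0 \<and> (\<forall>b'. b' $ j = 0 \<longrightarrow> lasso_obj X j lam b \<le> lasso_obj X j lam b')"
proof -
  define R where "R = lasso_obj X j lam 0 / lam"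
  define K where "K = {b::real^'p. b$j = 0 \<and> (\<Sum>k\<in>UNIV-{j}. \<bar>b$k\<bar>) \<le> R}"
  have cK: "compact K" unfolding K_def by (rule compact_l1)
  have R0: "R \<ge> 0" unfolding R_def lasso_obj_def using lam by simp
  have "0 \<in> K" unfolding K_def using R0 by simp
  hence ne: "K \<noteq> {}" by auto
  have cont: "continuous_on K (lasso_obj X j lam)"
    unfolding lasso_obj_def by (intro continuous_intros) auto
  obtain b where bK: "b \<in> K" and bmin: "\<forall>y\<in>K. lasso_obj X j lam b \<le> lasso_obj X j lam y"
    using continuous_attains_inf[OF cK ne cont] by blast
  show ?thesis
  proof (intro exI conjI allI impI)
    show "b $ j = 0" using bK K_def by auto
    fix b' :: "real^'p" assume b'j: "b' $ j = 0"
    show "lasso_obj X j lam b \<le> lasso_obj X j lam b'"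
    proof (cases "b' \<in> K")
      case True thus ?thesis using bmin by auto
    next
      case False
      hence "(\<Sum>k\<in>UNIV-{j}. \<bar>b'$k\<bar>) > R" using b'j K_def by auto
      hence "lam * (\<Sum>k\<in>UNIV-{j}. \<bar>b'$k\<bar>) > lam * R" using lam by simp
      also have "lam * R = lasso_obj X j lam 0" unfolding R_def using lam by simp
      finally have "lasso_obj X j lam 0 < lasso_obj X j lam b'"
        unfolding lasso_obj_def[of X j lam b'] by (smt (verit) divide_nonneg_nonneg zero_le_power2 of_nat_0_le_iff)
      moreover have "lasso_obj X j lam b \<le> lasso_obj X j lam 0" using bmin \<open>0 \<in> K\<close> by auto
      ultimately show ?thesis by simp
    qed
  qed
qed

lemma gamma_hat_opt:
  fixes X :: "real^'p^'n" and j :: 'p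
  assumes lam: "lam > 0"
  shows "gamma_hat X j lam $ j = 0 \<and> (\<forall>b'. b' $ j = 0 \<longrightarrow> lasso_obj X j lam (gamma_hat X j lam) \<le> lasso_obj X j lam b')"
  unfolding gamma_hat_def by (rule someI_ex[OF lasso_exists[OF lam]])


lemma l1_perturb:
  fixes g :: "real^'p" and j k :: 'p
  assumes "k \<noteq> j"
  shows "(\<Sum>i\<in>UNIV-{j}. \<bar>(g + t *\<^sub>R axis k 1) $ i\<bar>) \<le> (\<Sum>i\<in>UNIV-{j}. \<bar>g $ i\<bar>) + \<bar>t\<bar>"
proof -
  have "(\<Sum>i\<in>UNIV-{j}. \<bar>(g + t *\<^sub>R axis k 1) $ i\<bar>) \<le> (\<Sum>i\<in>UNIV-{j}. \<bar>g $ i\<bar> + (if i = k then \<bar>t\<bar> else 0))"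
    by (intro sum_mono) (auto simp: axis_def)
  also have "\<dots> = (\<Sum>i\<in>UNIV-{j}. \<bar>g $ i\<bar>) + \<bar>t\<bar>"
    using assms by (simp add: sum.distrib sum.delta)
  finally show ?thesis .
qed

lemma kkt1:
  fixes X :: "real^'p^'n" and j k :: 'p and g :: "real^'p"
  assumes opt: "g $ j = 0" "\<forall>b'. b' $ j = 0 \<longrightarrow> lasso_obj X j lam g \<le> lasso_obj X j lam b'"
    and lam: "lam > 0" and kj: "k \<noteq> j"
    and nk: "(norm (column k X))\<^sup>2 = real CARD('n)"
  shows "\<bar>column k X \<bullet> (column j X - X *v g)\<bar> \<le> real CARD('n) * lam"
proof (rule ccontr)
  define N where "N = real CARD('n)"
  have N0: "N > 0" unfolding N_def by simp
  define z where "z = column j X - X *v g"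
  define a where "a = column k X \<bullet> z"
  define S where "S = (\<Sum>i\<in>UNIV-{j}. \<bar>g $ i\<bar>)"
  assume "\<not> \<bar>column k X \<bullet> (column j X - X *v g)\<bar> \<le> real CARD('n) * lam"
  hence big: "\<bar>a\<bar> > N * lam" unfolding a_def z_def N_def by simp
  define d where "d = (\<bar>a\<bar> - N * lam) / N"
  have d0: "d > 0" unfolding d_def using big N0 by simp
  define t where "t = sgn a * d"
  have ta: "t * a = \<bar>a\<bar> * d" unfolding t_def by (simp add: sgn_mult_abs mult.commute mult.left_commute abs_sgn)
  have "N * lam > 0" using N0 lam by simp
  hence "a \<noteq> 0" using big by auto
  hence at: "\<bar>t\<bar> = d" unfolding t_def using d0
    by (auto simp: abs_mult abs_sgn_eq)
  define b where "b = g + t *\<^sub>R axis k 1"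
  have bj: "b $ j = 0" unfolding b_def using opt kj by (simp add: axis_def)
  have zb: "column j X - X *v b = z - t *\<^sub>R column k X"
    unfolding b_def z_def by (simp add: matrix_vector_right_distrib matrix_vector_mult_scaleR matrix_vector_mult_basis)
  have nz: "(norm (z - t *\<^sub>R column k X))\<^sup>2 = (norm z)\<^sup>2 - 2 * t * a + t^2 * N"
  proof -
    have nk': "column k X \<bullet> column k X = N" using nk unfolding N_def power2_norm_eq_inner .
    show ?thesis unfolding power2_norm_eq_inner a_def
      by (simp add: inner_diff_left inner_diff_right inner_commute nk' algebra_simps power2_eq_square)
  qed
  have "lasso_obj X j lam g \<le> lasso_obj X j lam b" using opt(2) bj by auto
  hence "(norm z)\<^sup>2 / (2*N) + lam * S \<le> ((norm z)\<^sup>2 - 2 * t * a + t^2 * N) / (2*N) + lam * (\<Sum>i\<in>UNIV-{j}. \<bar>b $ i\<bar>)"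
    unfolding lasso_obj_def z_def[symmetric] S_def N_def[symmetric] zb nz by simp
  also have "\<dots> \<le> ((norm z)\<^sup>2 - 2 * t * a + t^2 * N) / (2*N) + lam * (S + d)"
    using l1_perturb[OF kj, of g t] lam at unfolding b_def S_def by (intro add_left_mono mult_left_mono) auto
  finally have i1: "(norm z)\<^sup>2 / (2*N) \<le> ((norm z)\<^sup>2 - 2 * t * a + t^2 * N) / (2*N) + lam * d"
    by (simp add: algebra_simps)
  have "((norm z)\<^sup>2 - 2 * t * a + t^2 * N) / (2*N) = (norm z)\<^sup>2 / (2*N) + (- 2 * (t * a) + t^2 * N) / (2*N)"
    using N0 by (simp add: field_simps)
  with i1 have ineq: "0 \<le> (- 2 * (t * a) + t^2 * N) / (2*N) + lam * d" by linarith
  have t2: "t^2 = d^2" using at by (metis power2_abs)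
  have aa: "\<bar>a\<bar> = N*d + N*lam" unfolding d_def using N0 by simp
  have "(- 2 * (t * a) + t^2 * N) / (2*N) + lam * d = (- 2 * ((N*d + N*lam) * d) + d^2 * N) / (2*N) + lam * d"
    unfolding ta t2 aa ..
  also have "\<dots> = - ((d::real)\<^sup>2) / 2" using N0 by (simp add: field_simps power2_eq_square)
  finally have "(- 2 * (t * a) + t^2 * N) / (2*N) + lam * d = - ((d::real)\<^sup>2) / 2" .
  moreover have "d^2 > 0" using d0 by simp
  ultimately show False using ineq by linarith
qed


lemma kkt2:
  fixes X :: "real^'p^'n" and j :: 'p and g :: "real^'p"
  assumes opt: "g $ j = 0" "\<forall>b'. b' $ j = 0 \<longrightarrow> lasso_obj X j lam g \<le> lasso_obj X j lam b'"
    and lam: "lam > 0"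
  shows "real CARD('n) * lam * (\<Sum>i\<in>UNIV-{j}. \<bar>g $ i\<bar>) \<le> (column j X - X *v g) \<bullet> (X *v g)"
proof (rule ccontr)
  define N where "N = real CARD('n)"
  have N0: "N > 0" unfolding N_def by simp
  define z where "z = column j X - X *v g"
  define S where "S = (\<Sum>i\<in>UNIV-{j}. \<bar>g $ i\<bar>)"
  define A where "A = z \<bullet> (X *v g)"
  define C where "C = (norm (X *v g))\<^sup>2"
  define D where "D = N * lam * S"
  assume "\<not> ?thesis"
  hence AD: "A < D" unfolding A_def D_def N_def S_def z_def by simp
  have C0: "C \<ge> 0" unfolding C_def by simp
  define t where "t = min 1 ((D - A) / (C + 1))"
  have t0: "t > 0" unfolding t_def using AD C0 by simp
  have t1: "t \<le> 1" unfolding t_def by simp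
  have "t * C \<le> (D - A) / (C + 1) * C" unfolding t_def using C0 by (intro mult_right_mono) auto
  also have "\<dots> < D - A" using AD C0 by (simp add: field_simps)
  finally have tC: "t * C < D - A" .
  define b where "b = (1 - t) *\<^sub>R g"
  have bj: "b $ j = 0" unfolding b_def using opt by simp
  have zb: "column j X - X *v b = z + t *\<^sub>R (X *v g)"
    unfolding b_def z_def by (simp add: matrix_vector_mult_scaleR algebra_simps)
  have nz: "(norm (z + t *\<^sub>R (X *v g)))\<^sup>2 = (norm z)\<^sup>2 + 2 * t * A + t^2 * C"
    unfolding power2_norm_eq_inner A_def C_def
    by (simp add: inner_add_left inner_add_right inner_commute algebra_simps power2_eq_square)
  have Sb: "(\<Sum>i\<in>UNIV-{j}. \<bar>b $ i\<bar>) = (1 - t) * S"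
    unfolding b_def S_def using t1 by (simp add: abs_mult sum_distrib_left)
  have "lasso_obj X j lam g \<le> lasso_obj X j lam b" using opt(2) bj by auto
  hence i1: "(norm z)\<^sup>2 / (2*N) + lam * S \<le> ((norm z)\<^sup>2 + 2 * t * A + t^2 * C) / (2*N) + lam * ((1 - t) * S)"
    unfolding lasso_obj_def z_def[symmetric] S_def[symmetric] N_def[symmetric] zb nz Sb by simp
  have "((norm z)\<^sup>2 + 2 * t * A + t^2 * C) / (2*N) + lam * ((1 - t) * S)
        = (norm z)\<^sup>2 / (2*N) + lam * S + t * (2 * A + t * C - 2 * D) / (2 * N)"
    unfolding D_def using N0 by (simp add: field_simps power2_eq_square)
  with i1 have "0 \<le> t * (2 * A + t * C - 2 * D) / (2 * N)" by linarith
  hence "0 \<le> t * (2 * A + t * C - 2 * D)" using N0 by (simp add: zero_le_divide_iff)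
  hence "0 \<le> 2 * A + t * C - 2 * D" using t0 by (simp add: zero_le_mult_iff)
  with tC AD show False by linarith
qed


lemma per_lam:
  fixes X :: "real^'p^'n" and j :: 'p
  assumes p2: "CARD('p) \<ge> 2"
    and norm_cols: "\<forall>j. (norm (column j X))\<^sup>2 = real CARD('n)"
    and lam: "lam > 0" and T: "T > 0" and et: "eta X j lam > T"
  shows "\<exists>g. g $ j = 0 \<and> (\<Sum>i\<in>UNIV-{j}. \<bar>g $ i\<bar>) \<le> sqrt (real CARD('n)) / T
             \<and> norm (column j X - X *v g) \<le> real CARD('n) * lam / T"
proof -
  define N where "N = real CARD('n)"
  have N0: "N > 0" unfolding N_def by simp
  define g where "g = gamma_hat X j lam"
  have opt: "g $ j = 0" "\<forall>b'. b' $ j = 0 \<longrightarrow> lasso_obj X j lam g \<le> lasso_obj X j lam b'"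
    using gamma_hat_opt[OF lam, of X j] unfolding g_def by auto
  define z where "z = column j X - X *v g"
  have zs: "z_score X j lam = z" unfolding z_score_def z_def g_def ..
  define S where "S = (\<Sum>i\<in>UNIV-{j}. \<bar>g $ i\<bar>)"
  have fin: "finite (UNIV - {j})" by simp
  have ne: "UNIV - {j} \<noteq> {}"
  proof
    assume "UNIV - {j} = {}"
    hence "(UNIV :: 'p set) = {j}" by auto
    hence "CARD('p) = 1" by (metis card.empty card.insert empty_iff finite.emptyI One_nat_def)
    with p2 show False by simp
  qed
  have etaeq: "eta X j lam = Max ((\<lambda>k. \<bar>column k X \<bullet> z\<bar> / norm z) ` (UNIV - {j}))"
    unfolding eta_def zs ..
  have znz: "z \<noteq> 0"
  proof
    assume "z = 0"
    hence "eta X j lam = 0" unfolding etaeq using fin ne by simp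
    with et T show False by simp
  qed
  hence nz0: "norm z > 0" by simp
  have "eta X j lam \<le> N * lam / norm z"
    unfolding etaeq using fin ne
  proof (subst Max_le_iff, simp_all, intro ballI)
    fix k assume "k \<in> UNIV - {j}"
    hence "\<bar>column k X \<bullet> z\<bar> \<le> N * lam"
      using kkt1[OF opt lam, of k] norm_cols unfolding z_def N_def by auto
    thus "\<bar>column k X \<bullet> z\<bar> / norm z \<le> N * lam / norm z"
      using nz0 by (simp add: divide_right_mono)
  qed
  with et have "T < N * lam / norm z" by simp
  hence zb: "norm z < N * lam / T" using nz0 T by (simp add: field_simps)
  have "N * lam * S \<le> z \<bullet> (X *v g)" using kkt2[OF opt lam] unfolding z_def N_def S_def .
  also have "z \<bullet> (X *v g) = z \<bullet> column j X - z \<bullet> z" unfolding z_def by (simp add: inner_diff_right)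
  also have "\<dots> \<le> z \<bullet> column j X" by simp
  also have "\<dots> \<le> norm z * norm (column j X)" by (rule norm_cauchy_schwarz)
  also have "norm (column j X) = sqrt N" using norm_cols unfolding N_def
    by (metis norm_ge_zero real_sqrt_abs abs_of_nonneg)
  finally have "N * lam * S \<le> norm z * sqrt N" .
  hence "S \<le> norm z * sqrt N / (N * lam)" using N0 lam by (simp add: field_simps)
  also have "\<dots> \<le> (N * lam / T) * sqrt N / (N * lam)"
    using zb N0 lam by (intro divide_right_mono mult_right_mono) auto
  also have "\<dots> = sqrt N / T" using N0 lam by simp
  finally have "S \<le> sqrt N / T" .
  thus ?thesis using opt zb unfolding S_def N_def z_def by (intro exI[of _ g]) auto
qed

lemma exact_rep:
  fixes X :: "real^'p^'n" and j :: 'p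
  assumes p2: "CARD('p) \<ge> 2"
    and norm_cols: "\<forall>j. (norm (column j X))\<^sup>2 = real CARD('n)"
    and T: "T > 0" and et: "\<forall>lam>0. eta X j lam > T"
  shows "\<exists>g. g $ j = 0 \<and> (\<Sum>i\<in>UNIV-{j}. \<bar>g $ i\<bar>) \<le> sqrt (real CARD('n)) / T
             \<and> X *v g = column j X"
proof -
  define N where "N = real CARD('n)"
  have N0: "N > 0" unfolding N_def by simp
  define K where "K = {b::real^'p. b$j = 0 \<and> (\<Sum>k\<in>UNIV-{j}. \<bar>b$k\<bar>) \<le> sqrt N / T}"
  have cK: "compact K" unfolding K_def by (rule compact_l1)
  have "0 \<in> K" unfolding K_def using T N0 by simp
  hence ne: "K \<noteq> {}" by auto
  have cont: "continuous_on K (\<lambda>g. norm (column j X - X *v g))"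
    by (intro continuous_intros) 
  obtain g where gK: "g \<in> K" and gmin: "\<forall>y\<in>K. norm (column j X - X *v g) \<le> norm (column j X - X *v y)"
    using continuous_attains_inf[OF cK ne cont] by blast
  define m where "m = norm (column j X - X *v g)"
  have "m = 0"
  proof (rule ccontr)
    assume "m \<noteq> 0"
    hence m0: "m > 0" unfolding m_def by simp
    define lam where "lam = m * T / (2 * N)"
    have lam0: "lam > 0" unfolding lam_def using m0 T N0 by simp
    obtain h where h: "h $ j = 0" "(\<Sum>i\<in>UNIV-{j}. \<bar>h $ i\<bar>) \<le> sqrt N / T"
      "norm (column j X - X *v h) \<le> N * lam / T"
      using per_lam[OF p2 norm_cols lam0 T] et lam0 unfolding N_def by blast
    have "h \<in> K" unfolding K_def using h by simp
    hence "m \<le> N * lam / T" using gmin h(3) unfolding m_def by force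
    also have "\<dots> = m / 2" unfolding lam_def using N0 T by simp
    finally show False using m0 by simp
  qed
  thus ?thesis using gK unfolding m_def K_def N_def by (intro exI[of _ g]) auto
qed


lemma minimax_sep:
  fixes X :: "real^'p^'n" and Sset :: "(real^'p) set"
  assumes inf: "(INF delta :: real^'p^'n \<Rightarrow> real^'n \<Rightarrow> real^'p.
              SUP beta \<in> Sset. ereal ((norm (delta X (X *v beta) - beta))\<^sup>2)) \<le> ereal B"
    and b1: "b1 \<in> Sset" and b2: "b2 \<in> Sset" and eq: "X *v b1 = X *v b2"
  shows "(norm (b1 - b2))\<^sup>2 / 4 \<le> B"
proof -
  have "ereal ((norm (b1 - b2))\<^sup>2 / 4) \<le> (INF delta :: real^'p^'n \<Rightarrow> real^'n \<Rightarrow> real^'p.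
              SUP beta \<in> Sset. ereal ((norm (delta X (X *v beta) - beta))\<^sup>2))"
  proof (rule INF_greatest)
    fix delta :: "real^'p^'n \<Rightarrow> real^'n \<Rightarrow> real^'p"
    define d where "d = delta X (X *v b1)"
    have s1: "ereal ((norm (d - b1))\<^sup>2) \<le> (SUP beta \<in> Sset. ereal ((norm (delta X (X *v beta) - beta))\<^sup>2))"
      unfolding d_def using b1 by (rule SUP_upper2) simp
    have s2: "ereal ((norm (d - b2))\<^sup>2) \<le> (SUP beta \<in> Sset. ereal ((norm (delta X (X *v beta) - beta))\<^sup>2))"
      unfolding d_def eq using b2 by (rule SUP_upper2) simp
    have tri: "norm (b1 - b2) \<le> norm (d - b1) + norm (d - b2)"
      by (metis norm_diff_triangle_ineq norm_minus_commute diff_add_cancel add_diff_eq  norm_triangle_sub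
          dist_norm dist_triangle2)
    have mx: "(norm (b1 - b2))\<^sup>2 / 4 \<le> max ((norm (d - b1))\<^sup>2) ((norm (d - b2))\<^sup>2)"
    proof (cases "norm (d - b1) \<le> norm (d - b2)")
      case True
      hence "norm (b1 - b2) / 2 \<le> norm (d - b2)" using tri by simp
      hence "(norm (b1 - b2) / 2)\<^sup>2 \<le> (norm (d - b2))\<^sup>2" by (intro power_mono) auto
      thus ?thesis by (simp add: power_divide)
    next
      case False
      hence "norm (b1 - b2) / 2 \<le> norm (d - b1)" using tri by simp
      hence "(norm (b1 - b2) / 2)\<^sup>2 \<le> (norm (d - b1))\<^sup>2" by (intro power_mono) auto
      thus ?thesis by (simp add: power_divide)
    qed
    thus "ereal ((norm (b1 - b2))\<^sup>2 / 4) \<le> (SUP beta \<in> Sset. ereal ((norm (delta X (X *v beta) - beta))\<^sup>2))"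
    proof (cases "(norm (d - b1))\<^sup>2 \<le> (norm (d - b2))\<^sup>2")
      case True
      with mx have "ereal ((norm (b1 - b2))\<^sup>2 / 4) \<le> ereal ((norm (d - b2))\<^sup>2)" by (simp add: max_def)
      thus ?thesis using s2 by (rule order_trans)
    next
      case False
      with mx have "ereal ((norm (b1 - b2))\<^sup>2 / 4) \<le> ereal ((norm (d - b1))\<^sup>2)" by (simp add: max_def)
      thus ?thesis using s1 by (rule order_trans)
    qed
  qed
  also note inf
  finally show ?thesis by simp
qed


theorem proposition1:
  fixes X :: "real^'p^'n" and a0 C0 kappa1 :: real
  assumes p2: "CARD('p) \<ge> 2"
    and norm_cols: "\<forall>j. (norm (column j X))\<^sup>2 = real CARD('n)"
    and a0: "0 < a0" "a0 < 1" and C0: "1 \<le> C0"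
    and k1: "0 < kappa1" "kappa1 \<le> 1"
    and minimax:
      "(let lam_univ = sqrt ((2 / real CARD('n)) * ln (real CARD('p)));
            s = a0 * real CARD('n) / ln (real CARD('p))
        in (INF delta :: real^'p^'n \<Rightarrow> real^'n \<Rightarrow> real^'p.
              SUP beta \<in> {beta :: real^'p. (\<Sum>j\<in>UNIV. min (\<bar>beta $ j\<bar> / lam_univ) 1) \<le> s + 1}.
                ereal ((norm (delta X (X *v beta) - beta))\<^sup>2))
           \<le> ereal (2 * C0 * s * ln (real CARD('p)) / real CARD('n)))"
  shows "\<forall>j e. step1_eta_star X j kappa1 e \<longrightarrow>
           e \<le> (1 + kappa1) * sqrt ((4 * C0 / a0) * ln (real CARD('p)))"
proof (intro allI impI)
  fix j e assume st: "step1_eta_star X j kappa1 e"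
  define N where "N = real CARD('n)"
  define L where "L = ln (real CARD('p))"
  define s where "s = a0 * N / L"
  define lu where "lu = sqrt ((2 / N) * L)"
  define T where "T = sqrt ((4 * C0 / a0) * L)"
  have N0: "N > 0" unfolding N_def by simp
  have "real CARD('p) \<ge> 2" using p2 by simp
  hence L0: "L > 0" unfolding L_def by simp
  have s0: "s > 0" unfolding s_def using a0 N0 L0 by simp
  have lu0: "lu > 0" unfolding lu_def using N0 L0 by simp
  have T0: "T > 0" unfolding T_def using a0 C0 L0 by simp
  have Ls: "L = a0 * N / s" unfolding s_def using L0 a0 N0 by simp
  have "lu^2 = (2 / N) * L" unfolding lu_def using N0 L0 by (intro real_sqrt_pow2) simp
  hence lu2: "lu^2 = 2 * a0 / s" unfolding Ls using N0 s0 by (simp add: field_simps)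
  have "T^2 = (4 * C0 / a0) * L" unfolding T_def using a0 C0 L0 by (intro real_sqrt_pow2) simp
  hence T2: "T^2 = 4 * C0 * N / s" unfolding Ls using N0 s0 a0 by (simp add: field_simps)
  define Sset where "Sset = {beta :: real^'p. (\<Sum>j\<in>UNIV. min (\<bar>beta $ j\<bar> / lu) 1) \<le> s + 1}"
  have mm: "(INF delta :: real^'p^'n \<Rightarrow> real^'n \<Rightarrow> real^'p.
              SUP beta \<in> Sset. ereal ((norm (delta X (X *v beta) - beta))\<^sup>2))
           \<le> ereal (2 * C0 * a0)"
  proof -
    have "2 * C0 * s * L / N = 2 * C0 * a0" unfolding s_def using L0 N0 by simp
    thus ?thesis using minimax unfolding Let_def Sset_def lu_def s_def L_def N_def by simp
  qed
  have key: "\<exists>lam>0. eta X j lam \<le> T"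
  proof (rule ccontr)
    assume "\<not> ?thesis"
    hence et: "\<forall>lam>0. eta X j lam > T" by (auto simp: not_le)
    obtain g where g: "g $ j = 0" "(\<Sum>i\<in>UNIV-{j}. \<bar>g $ i\<bar>) \<le> sqrt N / T" "X *v g = column j X"
      using exact_rep[OF p2 norm_cols T0 et] unfolding N_def by blast
    define M where "M = sqrt N / T"
    have M0: "M > 0" unfolding M_def using N0 T0 by simp
    define c where "c = (s + 1) * lu / M"
    have c0: "c > 0" unfolding c_def using s0 lu0 M0 by simp
    define b1 where "b1 = c *\<^sub>R axis j (1::real)"
    define b2 where "b2 = c *\<^sub>R g"
    have "(\<Sum>i\<in>UNIV. min (\<bar>b1 $ i\<bar> / lu) 1) \<le> (\<Sum>i\<in>UNIV. if i = j then 1 else 0)"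
      by (intro sum_mono) (auto simp: b1_def axis_def)
    also have "\<dots> = 1" by simp
    finally have b1S: "b1 \<in> Sset" unfolding Sset_def using s0 by simp
    have "(\<Sum>i\<in>UNIV. min (\<bar>b2 $ i\<bar> / lu) 1) \<le> (\<Sum>i\<in>UNIV. c / lu * \<bar>g $ i\<bar>)"
      using c0 by (intro sum_mono) (auto simp: b2_def abs_mult intro: min.coboundedI1)
    also have "\<dots> = c / lu * (\<Sum>i\<in>UNIV. \<bar>g $ i\<bar>)" by (simp add: sum_distrib_left)
    also have "(\<Sum>i\<in>UNIV. \<bar>g $ i\<bar>) = (\<Sum>i\<in>UNIV-{j}. \<bar>g $ i\<bar>)"
      using g(1) by (simp add: sum.remove[of UNIV j])
    also have "c / lu * \<dots> \<le> c / lu * M" using g(2) c0 lu0 unfolding M_def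
      by (intro mult_left_mono) auto
    also have "\<dots> = s + 1" unfolding c_def using lu0 M0 by simp
    finally have b2S: "b2 \<in> Sset" unfolding Sset_def by simp
    have eq: "X *v b1 = X *v b2" unfolding b1_def b2_def
      by (simp add: matrix_vector_mult_scaleR matrix_vector_mult_basis g(3))
    have sep: "(norm (b1 - b2))\<^sup>2 / 4 \<le> 2 * C0 * a0" by (rule minimax_sep[OF mm b1S b2S eq])
    have "c \<le> norm (b1 - b2)"
      using component_le_norm_cart[of "b1 - b2" j] c0 g(1) unfolding b1_def b2_def by simp
    hence "c^2 \<le> (norm (b1 - b2))\<^sup>2" using c0 by (intro power_mono) auto
    with sep have c2: "c^2 / 4 \<le> 2 * C0 * a0" by simp
    have "M^2 = N / T^2" unfolding M_def using N0 by (simp add: power_divide)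
    hence "c^2 = (s+1)^2 * lu^2 * T^2 / N" unfolding c_def using N0 T0 by (simp add: power_divide power_mult_distrib)
    also have "\<dots> = 8 * C0 * a0 * (s+1)^2 / s^2" unfolding lu2 T2 using N0 s0 by (simp add: field_simps power2_eq_square)
    finally have "8 * C0 * a0 * (s+1)^2 / s^2 / 4 \<le> 2 * C0 * a0" using c2 by simp
    hence "(s+1)^2 \<le> s^2" using a0 C0 s0 by (simp add: field_simps)
    thus False using s0 by (simp add: power2_eq_square algebra_simps)
  qed
  define thr where "thr = step1_threshold X j kappa1"
  obtain lam where "lam > 0" "eta X j lam \<le> thr" "e = eta X j lam"
    using st unfolding step1_eta_star_def thr_def by blast
  hence e: "e \<le> thr" by simp
  have "thr \<le> (1 + kappa1) * T"
  proof (cases "\<forall>lam>0. eta X j lam > sqrt (2 * L)")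
    case True
    hence thr: "thr = (1 + kappa1) * (INF lam\<in>{0<..}. eta X j lam)"
      unfolding thr_def step1_threshold_def Let_def L_def by simp
    obtain l where l: "l > 0" "eta X j l \<le> T" using key by blast
    have bdd: "bdd_below ((\<lambda>lam. eta X j lam) ` {0<..})"
    proof (rule bdd_belowI2[of _ 0])
      fix x :: real assume "x \<in> {0<..}"
      hence "eta X j x > sqrt (2 * L)" using True by simp
      thus "0 \<le> eta X j x" by (smt (verit) real_sqrt_ge_zero L0)
    qed
    have "(INF lam\<in>{0<..}. eta X j lam) \<le> eta X j l" using l(1) by (intro cINF_lower[OF bdd]) simp
    with l have "(INF lam\<in>{0<..}. eta X j lam) \<le> T" by simp
    thus ?thesis unfolding thr using k1 by (intro mult_left_mono) auto
  next
    case False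
    hence thr: "thr = sqrt (2 * L)"
      unfolding thr_def step1_threshold_def Let_def L_def by auto
    have "2 * L \<le> (4 * C0 / a0) * L"
    proof -
      have "4 * C0 / a0 \<ge> 2" using a0 C0 by (simp add: field_simps)
      thus ?thesis using L0 by (intro mult_right_mono) auto
    qed
    hence "sqrt (2 * L) \<le> T" unfolding T_def by simp
    also have "T \<le> (1 + kappa1) * T" using k1 T0 by simp
    finally show ?thesis unfolding thr .
  qed
  with e show "e \<le> (1 + kappa1) * sqrt ((4 * C0 / a0) * ln (real CARD('p)))"
    unfolding T_def L_def by simp
qed


end
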